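(* Let $\varepsilon \ge 0$ and $\delta \in [0,1]$, and let $\mathcal{M}\colon\{0,1\}\to\{0,1\}$ be a randomized mechanism satisfying $(\varepsilon,\delta)$-differential privacy, i.e. for all $z\in\{0,1\}$ and all $\mathrm{x}\neq \mathrm{x}'$ in $\{0,1\}$, $$\Pr[\mathcal{M}(\mathrm{x})=z]\le e^{\varepsilon}\Pr[\mathcal{M}(\mathrm{x}')=z]+\delta.$$ Consider any classifier of the following form: it is given two probability distributions $\mathcal{S}_0,\mathcal{S}_1$ on $\mathbb{R}$, and to an individual whose reported (perturbed) value is $z\in\{0,1\}$ it assigns a score drawn from $\mathcal{S}_z$. Let $z=\mathcal{M}(1)$ be the report of a positive sample (true value $1$) and $z'=\mathcal{M}(0)$ the report of a negative sample (true value $0$), with the two runs of $\mathcal{M}$ independent, and let $s\sim\mathcal{S}_z$, $s'\sim\mathcal{S}_{z'}$ be drawn independently (given $z,z'$). Define the AUC of the classifier as $$\mathrm{AUC}=\Pr[s>s']+\tfrac12\Pr[s=s'].$$ Then $$\mathrm{AUC}\le 1-\frac{1-\delta}{e^{\varepsilon}+1}.$$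
   Context: The classifier (adversary) has access only to the reported values and to the mechanism $\mathcal{M}$, not to the true values; the AUC is the probability that a randomly chosen positive sample is ranked above a randomly chosen negative sample, with ties counted as $1/2$. *)

theory Defs
  imports "HOL-Probability.Probability"
begin

text \<open>Bits {0,1} are encoded as bool (True = 1, False = 0).
  A randomized mechanism is M :: bool => bool pmf; score distributions
  S z are probability measures on the Borel reals.\<close>

definition dp_mech :: "real \<Rightarrow> real \<Rightarrow> (bool \<Rightarrow> bool pmf) \<Rightarrow> bool" where
  "dp_mech \<epsilon> \<delta> M \<longleftrightarrow>
     (\<forall>z x x'. x \<noteq> x' \<longrightarrow> pmf (M x) z \<le> exp \<epsilon> * pmf (M x') z + \<delta>)"

text \<open>AUC = Pr[s > s'] + 1/2 Pr[s = s'], where z ~ M 1, z' ~ M 0 independently,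
  and s ~ S z, s' ~ S z' independently given z, z' (law of total probability).\<close>
definition auc :: "(bool \<Rightarrow> bool pmf) \<Rightarrow> (bool \<Rightarrow> real measure) \<Rightarrow> real" where
  "auc M S = (\<Sum>z\<in>UNIV. \<Sum>z'\<in>UNIV. pmf (M True) z * pmf (M False) z' *
      (measure (S z \<Otimes>\<^sub>M S z') {p. fst p > snd p}
       + 1/2 * measure (S z \<Otimes>\<^sub>M S z') {p. fst p = snd p}))"

end

theory Submission imports Defs begin

lemma meas_pred:
  assumes "sets M = sets borel" "sets N = sets (borel::real measure)"
  shows "{p. fst p > snd p} \<in> sets (M \<Otimes>\<^sub>M N)" "{p. fst p = snd p} \<in> sets (M \<Otimes>\<^sub>M N)"
    "{p. fst p < snd p} \<in> sets (M \<Otimes>\<^sub>M N)"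
proof -
  have e: "sets (M \<Otimes>\<^sub>M N) = sets (borel \<Otimes>\<^sub>M borel)"
    using assms by (intro sets_pair_measure_cong) auto
  have a: "Measurable.pred (borel \<Otimes>\<^sub>M borel) (\<lambda>p::real\<times>real. fst p > snd p)" by measurable
  have b: "Measurable.pred (borel \<Otimes>\<^sub>M borel) (\<lambda>p::real\<times>real. fst p = snd p)" by measurable
  have c: "Measurable.pred (borel \<Otimes>\<^sub>M borel) (\<lambda>p::real\<times>real. fst p < snd p)" by measurable
  show "{p. fst p > snd p} \<in> sets (M \<Otimes>\<^sub>M N)" unfolding e using a by (simp add: space_pair_measure pred_def measurable_count_space_eq2 vimage_def Collect_conj_eq)
  show "{p. fst p = snd p} \<in> sets (M \<Otimes>\<^sub>M N)" unfolding e using b by (simp add: space_pair_measure pred_def measurable_count_space_eq2 vimage_def Collect_conj_eq)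
  show "{p. fst p < snd p} \<in> sets (M \<Otimes>\<^sub>M N)" unfolding e using c by (simp add: space_pair_measure pred_def measurable_count_space_eq2 vimage_def Collect_conj_eq)
qed

lemma key:
  assumes "prob_space M" "prob_space N" "sets M = sets borel" "sets N = sets (borel::real measure)"
  shows "measure (M \<Otimes>\<^sub>M N) {p. fst p > snd p} + measure (N \<Otimes>\<^sub>M M) {p. fst p > snd p}
      + measure (M \<Otimes>\<^sub>M N) {p. fst p = snd p} = 1"
    "measure (N \<Otimes>\<^sub>M M) {p. fst p = snd p} = measure (M \<Otimes>\<^sub>M N) {p. fst p = snd p}"
proof -
  interpret P: pair_prob_space M N using assms by (simp add: pair_prob_space_def pair_sigma_finite_def prob_space_imp_sigma_finite)
  interpret Q: pair_prob_space N M using assms by (simp add: pair_prob_space_def pair_sigma_finite_def prob_space_imp_sigma_finite)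
  interpret PS: prob_space "M \<Otimes>\<^sub>M N" by (rule P.prob_space_axioms)
  have sw: "N \<Otimes>\<^sub>M M = distr (M \<Otimes>\<^sub>M N) (N \<Otimes>\<^sub>M M) (\<lambda>(x,y). (y,x))"
    by (rule Q.distr_pair_swap)
  have sp: "space (M \<Otimes>\<^sub>M N) = UNIV"
    using assms by (simp add: space_pair_measure sets_eq_imp_space_eq[of _ borel])
  have m1: "measure (N \<Otimes>\<^sub>M M) {p. fst p > snd p} = measure (M \<Otimes>\<^sub>M N) {p. fst p < snd p}"
    apply (subst sw) apply (subst measure_distr)
    using meas_pred[OF assms(4,3)] meas_pred[OF assms(3,4)] by (auto simp: sp intro!: arg_cong[where f="measure _"])
  show "measure (N \<Otimes>\<^sub>M M) {p. fst p = snd p} = measure (M \<Otimes>\<^sub>M N) {p. fst p = snd p}"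
    apply (subst sw) apply (subst measure_distr)
    using meas_pred[OF assms(4,3)] meas_pred[OF assms(3,4)] by (auto simp: sp intro!: arg_cong[where f="measure _"])
  have "measure (M \<Otimes>\<^sub>M N) ({p. fst p > snd p} \<union> {p. fst p < snd p} \<union> {p. fst p = snd p})
     = measure (M \<Otimes>\<^sub>M N) {p. fst p > snd p} + measure (M \<Otimes>\<^sub>M N) {p. fst p < snd p} + measure (M \<Otimes>\<^sub>M N) {p. fst p = snd p}"
    using meas_pred[OF assms(3,4)]
    by (subst P.finite_measure_Union, auto, subst P.finite_measure_Union, auto)
  moreover have "{p. fst p > snd p} \<union> {p. fst p < snd p} \<union> {p. fst p = snd p} = space (M \<Otimes>\<^sub>M N)"
    using sp by auto
  ultimately show "measure (M \<Otimes>\<^sub>M N) {p. fst p > snd p} + measure (N \<Otimes>\<^sub>M M) {p. fst p > snd p}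
      + measure (M \<Otimes>\<^sub>M N) {p. fst p = snd p} = 1" using m1 P.prob_space by simp
qed

lemma pmf_bool: "pmf (p::bool pmf) False = 1 - pmf p True"
proof -
  have "(\<Sum>x\<in>UNIV. pmf p x) = 1" by (rule sum_pmf_eq_1) auto
  then show ?thesis by (simp add: UNIV_bool)
qed

theorem theorem1:
  fixes \<epsilon> \<delta> :: real and M :: "bool \<Rightarrow> bool pmf" and S :: "bool \<Rightarrow> real measure"
  assumes "\<epsilon> \<ge> 0" and "0 \<le> \<delta>" and "\<delta> \<le> 1"
    and "dp_mech \<epsilon> \<delta> M"
    and "\<And>z. prob_space (S z)" and "\<And>z. sets (S z) = sets borel"
  shows "auc M S \<le> 1 - (1 - \<delta>) / (exp \<epsilon> + 1)"
proof -
  define a where "a z z' = measure (S z \<Otimes>\<^sub>M S z') {p. fst p > snd p}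
       + 1/2 * measure (S z \<Otimes>\<^sub>M S z') {p. fst p = snd p}" for z z'
  have asum: "a z z' + a z' z = 1" for z z'
    using key[OF assms(5)[of z] assms(5)[of z'] assms(6)[of z] assms(6)[of z']]
    unfolding a_def by linarith
  have anneg: "a z z' \<ge> 0" for z z' unfolding a_def by simp
  have a11: "a z z = 1/2" for z using asum[of z z] by simp
  define p where "p = pmf (M True) True"
  define q where "q = pmf (M False) True"
  define e where "e = exp \<epsilon>"
  have e1: "e \<ge> 1" using assms(1) by (simp add: e_def)
  have auc: "auc M S = 1/2 + (a True False - 1/2) * (p - q)"
  proof -
    have h: "a False True = 1 - a True False" "a True True = 1/2" "a False False = 1/2"
      using asum[of True False] a11[of True] a11[of False] by simp_all
    show ?thesis
      unfolding auc_def a_def[symmetric] p_def q_def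
      by (simp only: UNIV_bool h pmf_bool sum.insert sum.empty finite.intros insert_iff empty_iff simp_thms) (simp add: algebra_simps)
  qed
  have d1: "p \<le> e * q + \<delta>" "q \<le> e * p + \<delta>" "1 - p \<le> e * (1 - q) + \<delta>" "1 - q \<le> e * (1 - p) + \<delta>"
    using assms(4) unfolding dp_mech_def p_def q_def e_def
    by (metis pmf_bool)+
  have dd: "\<bar>p - q\<bar> * (1 + e) \<le> e - 1 + 2 * \<delta>"
    using d1 by (cases "p \<ge> q") (auto simp: algebra_simps)
  have xb: "\<bar>a True False - 1/2\<bar> \<le> 1/2"
    using anneg[of True False] anneg[of False True] asum[of True False] unfolding abs_le_iff by linarith
  have "(a True False - 1/2) * (p - q) \<le> \<bar>a True False - 1/2\<bar> * \<bar>p - q\<bar>"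
    by (metis abs_ge_self abs_mult)
  also have "\<dots> \<le> 1/2 * \<bar>p - q\<bar>" by (rule mult_right_mono[OF xb]) simp
  also have "\<dots> \<le> (e - 1 + 2 * \<delta>) / (2 * (1 + e))"
    using dd e1 by (simp add: field_simps)
  finally have "auc M S \<le> 1/2 + (e - 1 + 2 * \<delta>) / (2 * (1 + e))" using auc by simp
  also have "\<dots> = 1 - (1 - \<delta>) / (exp \<epsilon> + 1)"
    using e1 unfolding e_def[symmetric] by (simp add: field_simps)
  finally show ?thesis .
qed

end
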